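(* Let $h(t),\beta(t)$ be arbitrary smooth functions on an interval $I$ and $a,b,c,s$ real constants. Let $\Lambda(t)$ be an antiderivative of $\beta(t)-ah(t)$, fix $t_0\in I$, and set $$q(t)=e^{2\Lambda(t)}\Big((2a-b)s\int_{t_0}^te^{-2\Lambda(\tau)}\,d\tau+c\Big),$$ so that $q'=2(\beta-ah)q+(2a-b)s$. Define $$u=asyz+(\beta-ah)x,\quad v=-\beta y,\quad w=ahz,$$ $$H^1=ayz\,q(t)+\Big(\frac b2-a\Big)x,\quad H^2=-\frac b2y,\quad H^3=az,$$ $$p=-\rho\Big((\beta'-ah'+(\beta-ah)^2)\frac{x^2}{2}+(\beta^2-\beta')\frac{y^2}{2}+(ah'+a^2h^2)\frac{z^2}{2}-\mu_0a^2q^2\frac{y^2z^2}{2}-\mu_0aq\Big(\frac b2-a\Big)xyz\Big)+\theta(t),$$ with $\theta$ arbitrary. Then $\mathbf v=(u,v,w)^t$, $\mathbf H=(H^1,H^2,H^3)^t$ and $p$ solve the MHD system on $I\times\mathbb R^3$.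
   Context: Throughout, $\nu,\eta,\mu_0,\rho$ are positive constants. The MHD system for $\mathbf v=(u,v,w)^t$, $\mathbf H=(H^1,H^2,H^3)^t$, $p$, functions of $(t,x,y,z)$, is $$\nabla\cdot\mathbf v=0,\quad \mathbf v_t+(\mathbf v\cdot\nabla)\mathbf v-\mu_0(\mathbf H\times\operatorname{rot}\mathbf H)+\tfrac1\rho\nabla p=\nu\Delta\mathbf v,\quad \nabla\cdot\mathbf H=0,\quad \mathbf H_t=\operatorname{rot}(\mathbf v\times\mathbf H)+\eta\Delta\mathbf H,$$ with $\operatorname{rot}$ the curl and $\Delta$ the componentwise Laplacian in $(x,y,z)$. A prime denotes $d/dt$. *)

theory Defs
  imports "HOL-Analysis.Analysis"
begin

type_synonym field4 = "real \<Rightarrow> real \<Rightarrow> real \<Rightarrow> real \<Rightarrow> real"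

definition pt :: "field4 \<Rightarrow> field4" where
  "pt f = (\<lambda>t x y z. deriv (\<lambda>\<xi>. f \<xi> x y z) t)"
definition px :: "field4 \<Rightarrow> field4" where
  "px f = (\<lambda>t x y z. deriv (\<lambda>\<xi>. f t \<xi> y z) x)"
definition py :: "field4 \<Rightarrow> field4" where
  "py f = (\<lambda>t x y z. deriv (\<lambda>\<xi>. f t x \<xi> z) y)"
definition pz :: "field4 \<Rightarrow> field4" where
  "pz f = (\<lambda>t x y z. deriv (\<lambda>\<xi>. f t x y \<xi>) z)"

definition lap :: "field4 \<Rightarrow> field4" where
  "lap f = (\<lambda>t x y z. px (px f) t x y z + py (py f) t x y z + pz (pz f) t x y z)"

definition sdiff :: "field4 \<Rightarrow> real \<Rightarrow> real \<Rightarrow> real \<Rightarrow> real \<Rightarrow> bool" where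
  "sdiff f t x y z \<longleftrightarrow>
     (\<lambda>\<xi>. f t \<xi> y z) differentiable (at x) \<and>
     (\<lambda>\<xi>. f t x \<xi> z) differentiable (at y) \<and>
     (\<lambda>\<xi>. f t x y \<xi>) differentiable (at z)"

definition regular_field :: "real set \<Rightarrow> field4 \<Rightarrow> bool" where
  "regular_field I f \<longleftrightarrow> (\<forall>t\<in>I. \<forall>x y z.
     (\<lambda>\<xi>. f \<xi> x y z) differentiable (at t) \<and> sdiff f t x y z \<and>
     sdiff (px f) t x y z \<and> sdiff (py f) t x y z \<and> sdiff (pz f) t x y z)"

text \<open>The MHD system on I x R^3 for v = (u,v,w), H = (H1,H2,H3), pressure p.
  rot H = (R1,R2,R3), v x H = (E1,E2,E3), H x rot H = (F1,F2,F3).\<close>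
definition MHD_solution ::
  "real \<Rightarrow> real \<Rightarrow> real \<Rightarrow> real \<Rightarrow> real set \<Rightarrow>
   field4 \<Rightarrow> field4 \<Rightarrow> field4 \<Rightarrow> field4 \<Rightarrow> field4 \<Rightarrow> field4 \<Rightarrow> field4 \<Rightarrow> bool" where
  "MHD_solution \<nu> \<eta> \<mu>0 \<rho> I u v w H1 H2 H3 p \<longleftrightarrow>
    regular_field I u \<and> regular_field I v \<and> regular_field I w \<and>
    regular_field I H1 \<and> regular_field I H2 \<and> regular_field I H3 \<and>
    (\<forall>t\<in>I. \<forall>x y z. sdiff p t x y z) \<and>
    (let R1 = (\<lambda>t x y z. py H3 t x y z - pz H2 t x y z);
         R2 = (\<lambda>t x y z. pz H1 t x y z - px H3 t x y z);
         R3 = (\<lambda>t x y z. px H2 t x y z - py H1 t x y z);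
         F1 = (\<lambda>t x y z. H2 t x y z * R3 t x y z - H3 t x y z * R2 t x y z);
         F2 = (\<lambda>t x y z. H3 t x y z * R1 t x y z - H1 t x y z * R3 t x y z);
         F3 = (\<lambda>t x y z. H1 t x y z * R2 t x y z - H2 t x y z * R1 t x y z);
         E1 = (\<lambda>t x y z. v t x y z * H3 t x y z - w t x y z * H2 t x y z);
         E2 = (\<lambda>t x y z. w t x y z * H1 t x y z - u t x y z * H3 t x y z);
         E3 = (\<lambda>t x y z. u t x y z * H2 t x y z - v t x y z * H1 t x y z);
         adv = (\<lambda>f t x y z. u t x y z * px f t x y z + v t x y z * py f t x y z
                            + w t x y z * pz f t x y z)
     in \<forall>t\<in>I. \<forall>x y z.
       px u t x y z + py v t x y z + pz w t x y z = 0 \<and>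
       pt u t x y z + adv u t x y z - \<mu>0 * F1 t x y z + (1/\<rho>) * px p t x y z
          = \<nu> * lap u t x y z \<and>
       pt v t x y z + adv v t x y z - \<mu>0 * F2 t x y z + (1/\<rho>) * py p t x y z
          = \<nu> * lap v t x y z \<and>
       pt w t x y z + adv w t x y z - \<mu>0 * F3 t x y z + (1/\<rho>) * pz p t x y z
          = \<nu> * lap w t x y z \<and>
       px H1 t x y z + py H2 t x y z + pz H3 t x y z = 0 \<and>
       pt H1 t x y z = py E3 t x y z - pz E2 t x y z + \<eta> * lap H1 t x y z \<and>
       pt H2 t x y z = pz E1 t x y z - px E3 t x y z + \<eta> * lap H2 t x y z \<and>
       pt H3 t x y z = px E2 t x y z - py E1 t x y z + \<eta> * lap H3 t x y z)"

definition smooth_on :: "real set \<Rightarrow> (real \<Rightarrow> real) \<Rightarrow> bool" where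
  "smooth_on I f \<longleftrightarrow> (\<forall>n. \<forall>t\<in>I. ((deriv ^^ n) f) differentiable (at t))"

end

theory Submission
  imports Defs
begin

lemma FTC_open:
  fixes f :: "real \<Rightarrow> real"
  assumes "is_interval I" "open I" "t \<in> I" "t0 \<in> I" "continuous_on I f"
  shows "((\<lambda>u. LBINT y=t0..u. f y) has_real_derivative f t) (at t)"
proof -
  obtain e where e: "e > 0" "ball t e \<subseteq> I" using assms(2,3) open_contains_ball by blast
  define d where "d = min t0 (t - e/2)"
  define E where "E = max t0 (t + e/2)"
  have dI: "d \<in> I" using e assms(4) unfolding d_def min_def by (auto simp: dist_real_def)
  have EI: "E \<in> I" using e assms(4) unfolding E_def max_def by (auto simp: dist_real_def)
  have sub: "{d..E} \<subseteq> I"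
  proof
    fix x assume "x \<in> {d..E}"
    then have "d \<le> x" "x \<le> E" by auto
    then show "x \<in> I" using assms(1) dI EI unfolding is_interval_1 by blast
  qed
  have "((\<lambda>u. LBINT y=t0..u. f y) has_vector_derivative f t) (at t within {d..E})"
    by (rule interval_integral_FTC2) (use continuous_on_subset[OF assms(5) sub] e in \<open>simp_all add: d_def E_def\<close>)
  then have "((\<lambda>u. LBINT y=t0..u. f y) has_vector_derivative f t) (at t within {d<..<E})"
    by (rule has_vector_derivative_within_subset) auto
  then have "((\<lambda>u. LBINT y=t0..u. f y) has_vector_derivative f t) (at t)"
    using e by (subst (asm) has_vector_derivative_within_open) (auto simp: d_def E_def)
  then show ?thesis by (simp add: has_real_derivative_iff_has_vector_derivative)
qed

lemma px_eq: "(\<And>t x y z. ((\<lambda>\<xi>. f t \<xi> y z) has_real_derivative D t x y z) (at x)) \<Longrightarrow> px f = D"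
  unfolding px_def by (intro ext DERIV_imp_deriv)
lemma py_eq: "(\<And>t x y z. ((\<lambda>\<xi>. f t x \<xi> z) has_real_derivative D t x y z) (at y)) \<Longrightarrow> py f = D"
  unfolding py_def by (intro ext DERIV_imp_deriv)
lemma pz_eq: "(\<And>t x y z. ((\<lambda>\<xi>. f t x y \<xi>) has_real_derivative D t x y z) (at z)) \<Longrightarrow> pz f = D"
  unfolding pz_def by (intro ext DERIV_imp_deriv)
lemma pt_eq: "((\<lambda>\<xi>. f \<xi> x y z) has_real_derivative D) (at t) \<Longrightarrow> pt f t x y z = D"
  unfolding pt_def by (intro DERIV_imp_deriv)

theorem theorem3p1:
  fixes \<nu> \<eta> \<mu>0 \<rho> a b c s t0 :: real
    and I :: "real set"
    and h \<beta> \<Lambda> q \<theta> :: "real \<Rightarrow> real"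
  assumes pos: "\<nu> > 0" "\<eta> > 0" "\<mu>0 > 0" "\<rho> > 0"
    and I_int: "is_interval I" "open I" "I \<noteq> {}"
    and smooth: "smooth_on I h" "smooth_on I \<beta>"
    and Lam: "\<forall>t\<in>I. (\<Lambda> has_real_derivative (\<beta> t - a * h t)) (at t)"
    and t0: "t0 \<in> I"
    and q_def: "\<forall>t\<in>I. q t = exp (2 * \<Lambda> t) *
                  ((2*a - b) * s * (LBINT \<tau>=t0..t. exp (- 2 * \<Lambda> \<tau>)) + c)"
  shows "MHD_solution \<nu> \<eta> \<mu>0 \<rho> I
    (\<lambda>t x y z. a * s * y * z + (\<beta> t - a * h t) * x)
    (\<lambda>t x y z. - \<beta> t * y)
    (\<lambda>t x y z. a * h t * z)
    (\<lambda>t x y z. a * y * z * q t + (b/2 - a) * x)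
    (\<lambda>t x y z. - (b/2) * y)
    (\<lambda>t x y z. a * z)
    (\<lambda>t x y z. - \<rho> * (
        (deriv \<beta> t - a * deriv h t + (\<beta> t - a * h t)^2) * x^2 / 2
      + (\<beta> t ^ 2 - deriv \<beta> t) * y^2 / 2
      + (a * deriv h t + a^2 * h t ^ 2) * z^2 / 2
      - \<mu>0 * a^2 * q t ^ 2 * y^2 * z^2 / 2
      - \<mu>0 * a * q t * (b/2 - a) * x * y * z) + \<theta> t)"
proof -
  have Bd: "(\<beta> has_real_derivative deriv \<beta> t) (at t)" if "t \<in> I" for t
  proof -
    have "((deriv ^^ 0) \<beta>) differentiable (at t)" using smooth(2) that unfolding smooth_on_def by blast
    then show ?thesis by (simp add: DERIV_deriv_iff_real_differentiable)
  qed
  have Hd: "(h has_real_derivative deriv h t) (at t)" if "t \<in> I" for t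
  proof -
    have "((deriv ^^ 0) h) differentiable (at t)" using smooth(1) that unfolding smooth_on_def by blast
    then show ?thesis by (simp add: DERIV_deriv_iff_real_differentiable)
  qed
  have Lc: "continuous_on I \<Lambda>"
    using Lam by (intro continuous_at_imp_continuous_on ballI) (auto intro: DERIV_isCont)
  have ec: "continuous_on I (\<lambda>\<tau>. exp (- 2 * \<Lambda> \<tau>))"
    by (intro continuous_intros Lc)
  define F where "F = (\<lambda>u. LBINT \<tau>=t0..u. exp (- 2 * \<Lambda> \<tau>))"
  have qd: "(q has_real_derivative (2*(\<beta> t - a*h t)*q t + (2*a-b)* s)) (at t)" if t: "t \<in> I" for t
  proof -
    have Fd: "(F has_real_derivative exp (- 2 * \<Lambda> t)) (at t)"
      unfolding F_def by (rule FTC_open[OF I_int(1,2) t t0 ec])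
    have Ld: "(\<Lambda> has_real_derivative (\<beta> t - a * h t)) (at t)" using Lam t by blast
    have e: "exp (2 * \<Lambda> t) * exp (- 2 * \<Lambda> t) = 1" by (simp flip: exp_add)
    have "((\<lambda>u. exp (2 * \<Lambda> u) * ((2*a - b) * s * F u + c)) has_real_derivative
        (2*(\<beta> t - a*h t)*(exp (2 * \<Lambda> t) * ((2*a - b) * s * F t + c)) + (2*a-b)* s)) (at t)"
      apply (rule derivative_eq_intros Fd Ld | simp)+
      using e by (simp add: algebra_simps)
    then have "(q has_real_derivative (2*(\<beta> t - a*h t)*(exp (2 * \<Lambda> t) * ((2*a - b) * s * F t + c)) + (2*a-b)* s)) (at t)"
      by (rule has_field_derivative_transform_within_open[OF _ I_int(2) t]) (use q_def F_def in auto)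
    then show ?thesis using q_def t F_def by simp
  qed
  define U where "U = (\<lambda>t x y z. a * s * y * z + (\<beta> t - a * h t) * x)"
  define V where "V = (\<lambda>(t::real) (x::real) y (z::real). - \<beta> t * y)"
  define W where "W = (\<lambda>(t::real) (x::real) (y::real) z. a * h t * z)"
  define H1 where "H1 = (\<lambda>(t::real) x y z. a * y * z * q t + (b/2 - a) * x)"
  define H2 where "H2 = (\<lambda>(t::real) (x::real) y (z::real). - (b/2) * y)"
  define H3 where "H3 = (\<lambda>(t::real) (x::real) (y::real) z. a * z)"
  define P where "P = (\<lambda>t x y z. - \<rho> * (
        (deriv \<beta> t - a * deriv h t + (\<beta> t - a * h t)^2) * x^2 / 2
      + (\<beta> t ^ 2 - deriv \<beta> t) * y^2 / 2
      + (a * deriv h t + a^2 * h t ^ 2) * z^2 / 2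
      - \<mu>0 * a^2 * q t ^ 2 * y^2 * z^2 / 2
      - \<mu>0 * a * q t * (b/2 - a) * x * y * z) + \<theta> t)"

  have pxU: "px U = (\<lambda>t x y z. \<beta> t - a * h t)" unfolding U_def
    by (rule px_eq) (auto intro!: derivative_eq_intros)
  have pyU: "py U = (\<lambda>t x y z. a * s * z)" unfolding U_def
    by (rule py_eq) (auto intro!: derivative_eq_intros)
  have pzU: "pz U = (\<lambda>t x y z. a * s * y)" unfolding U_def
    by (rule pz_eq) (auto intro!: derivative_eq_intros)
  have pxV: "px V = (\<lambda>t x y z. 0)" unfolding V_def
    by (rule px_eq) (auto intro!: derivative_eq_intros)
  have pyV: "py V = (\<lambda>t x y z. - \<beta> t)" unfolding V_def
    by (rule py_eq) (auto intro!: derivative_eq_intros)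
  have pzV: "pz V = (\<lambda>t x y z. 0)" unfolding V_def
    by (rule pz_eq) (auto intro!: derivative_eq_intros)
  have pxW: "px W = (\<lambda>t x y z. 0)" unfolding W_def
    by (rule px_eq) (auto intro!: derivative_eq_intros)
  have pyW: "py W = (\<lambda>t x y z. 0)" unfolding W_def
    by (rule py_eq) (auto intro!: derivative_eq_intros)
  have pzW: "pz W = (\<lambda>t x y z. a * h t)" unfolding W_def
    by (rule pz_eq) (auto intro!: derivative_eq_intros)
  have pxH1: "px H1 = (\<lambda>t x y z. b/2 - a)" unfolding H1_def
    by (rule px_eq) (auto intro!: derivative_eq_intros)
  have pyH1: "py H1 = (\<lambda>t x y z. a * z * q t)" unfolding H1_def
    by (rule py_eq) (auto intro!: derivative_eq_intros)
  have pzH1: "pz H1 = (\<lambda>t x y z. a * y * q t)" unfolding H1_def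
    by (rule pz_eq) (auto intro!: derivative_eq_intros)
  have pxH2: "px H2 = (\<lambda>t x y z. 0)" unfolding H2_def
    by (rule px_eq) (auto intro!: derivative_eq_intros)
  have pyH2: "py H2 = (\<lambda>t x y z. - (b/2))" unfolding H2_def
    by (rule py_eq) (auto intro!: derivative_eq_intros)
  have pzH2: "pz H2 = (\<lambda>t x y z. 0)" unfolding H2_def
    by (rule pz_eq) (auto intro!: derivative_eq_intros)
  have pxH3: "px H3 = (\<lambda>t x y z. 0)" unfolding H3_def
    by (rule px_eq) (auto intro!: derivative_eq_intros)
  have pyH3: "py H3 = (\<lambda>t x y z. 0)" unfolding H3_def
    by (rule py_eq) (auto intro!: derivative_eq_intros)
  have pzH3: "pz H3 = (\<lambda>t x y z. a)" unfolding H3_def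
    by (rule pz_eq) (auto intro!: derivative_eq_intros)
  have pxc: "px (\<lambda>t x y z. f t y z) = (\<lambda>t x y z. 0)" for f :: "real \<Rightarrow> real \<Rightarrow> real \<Rightarrow> real"
    by (rule px_eq) (auto intro!: derivative_eq_intros)
  have pyc: "py (\<lambda>t x y z. f t x z) = (\<lambda>t x y z. 0)" for f :: "real \<Rightarrow> real \<Rightarrow> real \<Rightarrow> real"
    by (rule py_eq) (auto intro!: derivative_eq_intros)
  have pzc: "pz (\<lambda>t x y z. f t x y) = (\<lambda>t x y z. 0)" for f :: "real \<Rightarrow> real \<Rightarrow> real \<Rightarrow> real"
    by (rule pz_eq) (auto intro!: derivative_eq_intros)
  have lapU: "lap U = (\<lambda>t x y z. 0)" and lapV: "lap V = (\<lambda>t x y z. 0)" and lapW: "lap W = (\<lambda>t x y z. 0)"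
    and lapH1: "lap H1 = (\<lambda>t x y z. 0)" and lapH2: "lap H2 = (\<lambda>t x y z. 0)" and lapH3: "lap H3 = (\<lambda>t x y z. 0)"
    unfolding lap_def pxU pyU pzU pxV pyV pzV pxW pyW pzW pxH1 pyH1 pzH1 pxH2 pyH2 pzH2 pxH3 pyH3 pzH3 pxc pyc pzc
    by simp_all
  have pxP: "px P = (\<lambda>t x y z. - \<rho> * ((deriv \<beta> t - a * deriv h t + (\<beta> t - a * h t)^2) * x
      - \<mu>0 * a * q t * (b/2 - a) * y * z))" unfolding P_def
    by (rule px_eq) (auto intro!: derivative_eq_intros simp: field_simps power2_eq_square)
  have pyP: "py P = (\<lambda>t x y z. - \<rho> * ((\<beta> t ^ 2 - deriv \<beta> t) * y
      - \<mu>0 * a^2 * q t ^ 2 * y * z^2 - \<mu>0 * a * q t * (b/2 - a) * x * z))" unfolding P_def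
    by (rule py_eq) (auto intro!: derivative_eq_intros simp: field_simps power2_eq_square)
  have pzP: "pz P = (\<lambda>t x y z. - \<rho> * ((a * deriv h t + a^2 * h t ^ 2) * z
      - \<mu>0 * a^2 * q t ^ 2 * y^2 * z - \<mu>0 * a * q t * (b/2 - a) * x * y))" unfolding P_def
    by (rule pz_eq) (auto intro!: derivative_eq_intros simp: field_simps power2_eq_square)
  have ptU: "pt U t x y z = (deriv \<beta> t - a * deriv h t) * x" if "t \<in> I" for t x y z
    unfolding U_def by (rule pt_eq) (auto intro!: derivative_eq_intros Bd Hd that)
  have ptV: "pt V t x y z = - deriv \<beta> t * y" if "t \<in> I" for t x y z
    unfolding V_def by (rule pt_eq) (auto intro!: derivative_eq_intros Bd Hd that)
  have ptW: "pt W t x y z = a * deriv h t * z" if "t \<in> I" for t x y z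
    unfolding W_def by (rule pt_eq) (auto intro!: derivative_eq_intros Bd Hd that)
  have ptH1: "pt H1 t x y z = a * y * z * (2*(\<beta> t - a*h t)*q t + (2*a-b) * s)" if "t \<in> I" for t x y z
    unfolding H1_def by (rule pt_eq) (auto intro!: derivative_eq_intros qd that)
  have ptH2: "pt H2 t x y z = 0" for t x y z
    unfolding H2_def by (rule pt_eq) (auto intro!: derivative_eq_intros)
  have ptH3: "pt H3 t x y z = 0" for t x y z
    unfolding H3_def by (rule pt_eq) (auto intro!: derivative_eq_intros)

  have E3y: "py (\<lambda>t x y z. U t x y z * H2 t x y z - V t x y z * H1 t x y z) =
     (\<lambda>t x y z. (a * s * z) * (- (b/2) * y) + (a * s * y * z + (\<beta> t - a * h t) * x) * (- (b/2))
        - (- \<beta> t) * (a * y * z * q t + (b/2 - a) * x) - (- \<beta> t * y) * (a * z * q t))"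
    unfolding U_def V_def H1_def H2_def by (rule py_eq) (auto intro!: derivative_eq_intros simp: field_simps)
  have E3x: "px (\<lambda>t x y z. U t x y z * H2 t x y z - V t x y z * H1 t x y z) =
     (\<lambda>t x y z. (\<beta> t - a * h t) * (- (b/2) * y) - (- \<beta> t * y) * (b/2 - a))"
    unfolding U_def V_def H1_def H2_def by (rule px_eq) (auto intro!: derivative_eq_intros simp: field_simps)
  have E2z: "pz (\<lambda>t x y z. W t x y z * H1 t x y z - U t x y z * H3 t x y z) =
     (\<lambda>t x y z. (a * h t) * (a * y * z * q t + (b/2 - a) * x) + (a * h t * z) * (a * y * q t)
        - (a * s * y) * (a * z) - (a * s * y * z + (\<beta> t - a * h t) * x) * a)"
    unfolding U_def W_def H1_def H3_def by (rule pz_eq) (auto intro!: derivative_eq_intros simp: field_simps)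
  have E2x: "px (\<lambda>t x y z. W t x y z * H1 t x y z - U t x y z * H3 t x y z) =
     (\<lambda>t x y z. (a * h t * z) * (b/2 - a) - (\<beta> t - a * h t) * (a * z))"
    unfolding U_def W_def H1_def H3_def by (rule px_eq) (auto intro!: derivative_eq_intros simp: field_simps)
  have E1z: "pz (\<lambda>t x y z. V t x y z * H3 t x y z - W t x y z * H2 t x y z) =
     (\<lambda>t x y z. (- \<beta> t * y) * a - (a * h t) * (- (b/2) * y))"
    unfolding V_def W_def H2_def H3_def by (rule pz_eq) (auto intro!: derivative_eq_intros simp: field_simps)
  have E1y: "py (\<lambda>t x y z. V t x y z * H3 t x y z - W t x y z * H2 t x y z) =
     (\<lambda>t x y z. (- \<beta> t) * (a * z) - (a * h t * z) * (- (b/2)))"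
    unfolding V_def W_def H2_def H3_def by (rule py_eq) (auto intro!: derivative_eq_intros simp: field_simps)
  have rU: "regular_field I U" unfolding regular_field_def sdiff_def pxU pyU pzU
    by (auto simp: U_def real_differentiable_def intro!: derivative_eq_intros Bd Hd)
  have rV: "regular_field I V" unfolding regular_field_def sdiff_def pxV pyV pzV
    by (auto simp: V_def real_differentiable_def intro!: derivative_eq_intros Bd Hd)
  have rW: "regular_field I W" unfolding regular_field_def sdiff_def pxW pyW pzW
    by (auto simp: W_def real_differentiable_def intro!: derivative_eq_intros Bd Hd)
  have rH1: "regular_field I H1" unfolding regular_field_def sdiff_def pxH1 pyH1 pzH1
    by (auto simp: H1_def real_differentiable_def intro!: derivative_eq_intros qd)
  have rH2: "regular_field I H2" unfolding regular_field_def sdiff_def pxH2 pyH2 pzH2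
    by (auto simp: H2_def real_differentiable_def intro!: derivative_eq_intros)
  have rH3: "regular_field I H3" unfolding regular_field_def sdiff_def pxH3 pyH3 pzH3
    by (auto simp: H3_def real_differentiable_def intro!: derivative_eq_intros)
  have rP: "\<forall>t\<in>I. \<forall>x y z. sdiff P t x y z" unfolding sdiff_def
    by (auto simp: P_def real_differentiable_def intro!: derivative_eq_intros)
  have "MHD_solution \<nu> \<eta> \<mu>0 \<rho> I U V W H1 H2 H3 P"
    unfolding MHD_solution_def Let_def
    apply (intro conjI rU rV rW rH1 rH2 rH3 rP ballI allI)
    apply (simp_all only: ptU ptV ptW ptH1 ptH2 ptH3 pxU pyU pzU pxV pyV pzV pxW pyW pzW
       pxH1 pyH1 pzH1 pxH2 pyH2 pzH2 pxH3 pyH3 pzH3 E3y E3x E2z E2x E1z E1y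
       lapU lapV lapW lapH1 lapH2 lapH3 pxP pyP pzP)
    using pos(4) by (simp_all add: U_def V_def W_def H1_def H2_def H3_def field_simps power2_eq_square)
  then show ?thesis unfolding U_def V_def W_def H1_def H2_def H3_def P_def .
qed

end
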